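(* For every relaxed scenario $\mathscr{S}$, the weak quasi-orthology graph $\mathrm{wQO}(\mathscr{S})$ and the weak orthology graph $\mathrm{wO}(\mathscr{S})$ are cographs.
   Context: All trees are planted phylogenetic trees: a tree $T$ has a distinguished vertex $0_T$ of degree $1$ whose unique neighbor $\rho_T$ is the root, and every vertex other than $0_T$ and the leaves $L(T)$ has at least two children. For $x,y\in V(T)$ write $y\preceq_T x$ if $x$ lies on the path from $0_T$ to $y$; edges are written $uv$ with $v\prec_T u$. The order extends to $V(T)\cup E(T)$: for a vertex $x$ and an edge $e=uv$, $x\preceq_T e$ iff $x\preceq_T v$, and $e\preceq_T x$ iff $u\preceq_T x$; for edges, $uv\preceq_T ab$ iff $v\preceq_T b$. Two elements are comparable if one is $\preceq$ the other. $V^0(T)=V(T)\setminus(L(T)\cup\{0_T\})$; $\mathrm{lca}_T$ denotes the last common ancestor. A time map for $T$ is $\tau_T\colon V(T)\to\mathbb{R}$ with $\tau_T(x)<\tau_T(y)$ whenever $x\prec_T y$. A relaxed scenario $\mathscr{S}=(T,S,\sigma,\mu,\tau_T,\tau_S)$ consists of a gene tree $T$ with time map $\tau_T$, a species tree $S$ with time map $\tau_S$, a map $\sigma\colon L(T)\to M$ with $M\subseteq L(S)$, and a map $\mu\colon V(T)\to V(S)\cup E(S)$ such that (S0) $\mu(x)=0_S$ iff $x=0_T$; (S1) $\mu(x)\in L(S)$ iff $x\in L(T)$, in which case $\mu(x)=\sigma(x)$; (S2) if $\mu(x)\in V(S)$ then $\tau_S(\mu(x))=\tau_T(x)$; (S3)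 if $\mu(x)=uv\in E(S)$ then $\tau_S(v)<\tau_T(x)<\tau_S(u)$. An edge $uv\in E(T)$ is an HGT-edge if $\mu(u)$ and $\mu(v)$ are incomparable in $S$. $\mathrm{wQO}(\mathscr{S})$ has vertex set $L(T)$ and edges $xy$, $x\ne y$, with $\mu(\mathrm{lca}_T(x,y))\in V^0(S)$; $\mathrm{wO}(\mathscr{S})$ has vertex set $L(T)$ and edges $xy$, $x\neq y$, with $\mu(\mathrm{lca}_T(x,y))\in V^0(S)$ and no HGT-edge on the path between $x$ and $y$ in $T$. A cograph is a graph with no induced path on four vertices. *)

theory Defs
  imports Main "HOL.Real"
begin

text \<open>A planted tree is given by a finite vertex set V, a set E of directed edges (u,v)
  where v is a child of u (so v \<prec> u), and the distinguished planted vertex z = 0_T.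
  y below-or-equal x iff (x,y) is in the reflexive transitive closure of E.\<close>

definition planted_phylo_tree :: "'a set \<Rightarrow> ('a \<times> 'a) set \<Rightarrow> 'a \<Rightarrow> bool" where
  "planted_phylo_tree V E z \<longleftrightarrow>
     finite V \<and> E \<subseteq> V \<times> V \<and> z \<in> V \<and>
     (\<forall>u. (u, z) \<notin> E) \<and>
     (\<forall>v \<in> V - {z}. \<exists>!u. (u, v) \<in> E) \<and>
     (\<forall>v \<in> V. (z, v) \<in> E\<^sup>*) \<and>
     card {w. (z, w) \<in> E} = 1 \<and>
     (\<forall>v \<in> V - {z}. {w. (v, w) \<in> E} \<noteq> {} \<longrightarrow> card {w. (v, w) \<in> E} \<ge> 2)"

definition leaves :: "'a set \<Rightarrow> ('a \<times> 'a) set \<Rightarrow> 'a \<Rightarrow> 'a set" where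
  "leaves V E z = {v \<in> V. v \<noteq> z \<and> (\<forall>w. (v, w) \<notin> E)}"

definition inner :: "'a set \<Rightarrow> ('a \<times> 'a) set \<Rightarrow> 'a \<Rightarrow> 'a set" where
  "inner V E z = V - (leaves V E z \<union> {z})"

definition time_map :: "'a set \<Rightarrow> ('a \<times> 'a) set \<Rightarrow> ('a \<Rightarrow> real) \<Rightarrow> bool" where
  "time_map V E \<tau> \<longleftrightarrow> (\<forall>x \<in> V. \<forall>y \<in> V. (y, x) \<in> E\<^sup>+ \<longrightarrow> \<tau> x < \<tau> y)"

definition lca :: "('a \<times> 'a) set \<Rightarrow> 'a \<Rightarrow> 'a \<Rightarrow> 'a" where
  "lca E x y = (THE w. (w, x) \<in> E\<^sup>* \<and> (w, y) \<in> E\<^sup>* \<and>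
       (\<forall>w'. (w', x) \<in> E\<^sup>* \<and> (w', y) \<in> E\<^sup>* \<longrightarrow> (w', w) \<in> E\<^sup>*))"

text \<open>elements of V(S) \<union> E(S)\<close>
datatype 'b loc = Vx 'b | Ed 'b 'b

fun le :: "('b \<times> 'b) set \<Rightarrow> 'b loc \<Rightarrow> 'b loc \<Rightarrow> bool" where
  "le E (Vx x) (Vx y) \<longleftrightarrow> (y, x) \<in> E\<^sup>*"
| "le E (Vx x) (Ed u v) \<longleftrightarrow> (v, x) \<in> E\<^sup>*"
| "le E (Ed u v) (Vx x) \<longleftrightarrow> (x, u) \<in> E\<^sup>*"
| "le E (Ed u v) (Ed a b) \<longleftrightarrow> (b, v) \<in> E\<^sup>*"

definition comparable :: "('b \<times> 'b) set \<Rightarrow> 'b loc \<Rightarrow> 'b loc \<Rightarrow> bool" where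
  "comparable E a b \<longleftrightarrow> le E a b \<or> le E b a"

definition relaxed_scenario ::
  "'a set \<Rightarrow> ('a \<times> 'a) set \<Rightarrow> 'a \<Rightarrow> 'b set \<Rightarrow> ('b \<times> 'b) set \<Rightarrow> 'b \<Rightarrow>
   ('a \<Rightarrow> 'b) \<Rightarrow> ('a \<Rightarrow> 'b loc) \<Rightarrow> ('a \<Rightarrow> real) \<Rightarrow> ('b \<Rightarrow> real) \<Rightarrow> bool" where
  "relaxed_scenario VT ET zT VS ES zS \<sigma> \<mu> \<tau>T \<tau>S \<longleftrightarrow>
     planted_phylo_tree VT ET zT \<and> planted_phylo_tree VS ES zS \<and>
     time_map VT ET \<tau>T \<and> time_map VS ES \<tau>S \<and>
     (\<forall>x \<in> leaves VT ET zT. \<sigma> x \<in> leaves VS ES zS) \<and>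
     (\<forall>x \<in> VT. (\<exists>w \<in> VS. \<mu> x = Vx w) \<or> (\<exists>u v. (u, v) \<in> ES \<and> \<mu> x = Ed u v)) \<and>
     (\<forall>x \<in> VT. \<mu> x = Vx zS \<longleftrightarrow> x = zT) \<and>
     (\<forall>x \<in> VT. (\<exists>l \<in> leaves VS ES zS. \<mu> x = Vx l) \<longleftrightarrow> x \<in> leaves VT ET zT) \<and>
     (\<forall>x \<in> leaves VT ET zT. \<mu> x = Vx (\<sigma> x)) \<and>
     (\<forall>x \<in> VT. \<forall>w. \<mu> x = Vx w \<longrightarrow> \<tau>S w = \<tau>T x) \<and>
     (\<forall>x \<in> VT. \<forall>u v. \<mu> x = Ed u v \<longrightarrow> \<tau>S v < \<tau>T x \<and> \<tau>T x < \<tau>S u)"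

definition hgt_edge :: "('a \<times> 'a) set \<Rightarrow> ('b \<times> 'b) set \<Rightarrow> ('a \<Rightarrow> 'b loc) \<Rightarrow> 'a \<Rightarrow> 'a \<Rightarrow> bool" where
  "hgt_edge ET ES \<mu> u v \<longleftrightarrow> (u, v) \<in> ET \<and> \<not> comparable ES (\<mu> u) (\<mu> v)"

definition on_path :: "('a \<times> 'a) set \<Rightarrow> 'a \<Rightarrow> 'a \<Rightarrow> 'a \<Rightarrow> 'a \<Rightarrow> bool" where
  "on_path ET x y u v \<longleftrightarrow> (u, v) \<in> ET \<and> (((v, x) \<in> ET\<^sup>*) \<noteq> ((v, y) \<in> ET\<^sup>*))"

definition wQO_adj :: "('a \<times> 'a) set \<Rightarrow> 'b set \<Rightarrow> ('b \<times> 'b) set \<Rightarrow> 'b \<Rightarrow> ('a \<Rightarrow> 'b loc) \<Rightarrow> 'a \<Rightarrow> 'a \<Rightarrow> bool" where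
  "wQO_adj ET VS ES zS \<mu> x y \<longleftrightarrow> x \<noteq> y \<and> (\<exists>w \<in> inner VS ES zS. \<mu> (lca ET x y) = Vx w)"

definition wO_adj :: "('a \<times> 'a) set \<Rightarrow> 'b set \<Rightarrow> ('b \<times> 'b) set \<Rightarrow> 'b \<Rightarrow> ('a \<Rightarrow> 'b loc) \<Rightarrow> 'a \<Rightarrow> 'a \<Rightarrow> bool" where
  "wO_adj ET VS ES zS \<mu> x y \<longleftrightarrow> wQO_adj ET VS ES zS \<mu> x y \<and>
     \<not> (\<exists>u v. on_path ET x y u v \<and> hgt_edge ET ES \<mu> u v)"

definition cograph :: "'a set \<Rightarrow> ('a \<Rightarrow> 'a \<Rightarrow> bool) \<Rightarrow> bool" where
  "cograph V adj \<longleftrightarrow> \<not> (\<exists>a \<in> V. \<exists>b \<in> V. \<exists>c \<in> V. \<exists>d \<in> V.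
      distinct [a, b, c, d] \<and> adj a b \<and> adj b c \<and> adj c d \<and>
      \<not> adj a c \<and> \<not> adj b d \<and> \<not> adj a d)"

end

theory Submission
  imports Defs
begin

locale tr =
  fixes V :: "'a set" and E :: "('a \<times> 'a) set" and z :: 'a and \<tau> :: "'a \<Rightarrow> real"
  assumes fin: "finite V" and EV: "E \<subseteq> V \<times> V" and nz: "\<forall>u. (u, z) \<notin> E"
    and par: "\<forall>v \<in> V - {z}. \<exists>!u. (u, v) \<in> E"
    and root: "\<forall>v \<in> V. (z, v) \<in> E\<^sup>*"
    and tm: "time_map V E \<tau>"
begin

lemma anc_in: "(w, x) \<in> E\<^sup>* \<Longrightarrow> x \<in> V \<Longrightarrow> w \<in> V"
  by (erule converse_rtranclE) (use EV in auto)

lemma antis: "(a, b) \<in> E\<^sup>* \<Longrightarrow> (b, a) \<in> E\<^sup>* \<Longrightarrow> b \<in> V \<Longrightarrow> a = b"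
proof (rule ccontr)
  assume h: "(a, b) \<in> E\<^sup>*" "(b, a) \<in> E\<^sup>*" "b \<in> V" "a \<noteq> b"
  then have "(a, b) \<in> E\<^sup>+" by (meson rtranclD)
  then have "(a, a) \<in> E\<^sup>+" using h by auto
  moreover have "a \<in> V" using anc_in h by blast
  ultimately show False using tm unfolding time_map_def by fastforce
qed

lemma chain: "(w1, x) \<in> E\<^sup>* \<Longrightarrow> (w2, x) \<in> E\<^sup>* \<Longrightarrow> (w1, w2) \<in> E\<^sup>* \<or> (w2, w1) \<in> E\<^sup>*"
proof (induction arbitrary: w2 rule: rtrancl_induct)
  case base
  then show ?case by simp
next
  case (step y x)
  from step.prems show ?case
  proof (cases rule: rtranclE)
    case base
    then show ?thesis using step by (meson rtrancl.rtrancl_into_rtrancl)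
  next
    case (step y')
    have xV: "x \<in> V" "x \<noteq> z" using \<open>(y, x) \<in> E\<close> EV nz by auto
    then have "y' = y" using par step \<open>(y, x) \<in> E\<close> by blast
    then show ?thesis using step.IH step by blast
  qed
qed

definition "L x y = lca E x y"

lemma lca_prop:
  assumes xV: "x \<in> V" and yV: "y \<in> V"
  shows "(L x y, x) \<in> E\<^sup>* \<and> (L x y, y) \<in> E\<^sup>* \<and>
     (\<forall>w'. (w', x) \<in> E\<^sup>* \<and> (w', y) \<in> E\<^sup>* \<longrightarrow> (w', L x y) \<in> E\<^sup>*)"
proof -
  define C where "C = {w. (w, x) \<in> E\<^sup>* \<and> (w, y) \<in> E\<^sup>*}"
  have CV: "C \<subseteq> V" using anc_in xV unfolding C_def by blast
  have fC: "finite C" using CV fin finite_subset by blast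
  have zC: "z \<in> C" using root xV yV unfolding C_def by blast
  define m where "m = Min (\<tau> ` C)"
  have "m \<in> \<tau> ` C" unfolding m_def using fC zC by (intro Min_in) auto
  then obtain w where wC: "w \<in> C" and wm: "\<tau> w = m" by auto
  have wmin: "\<forall>w' \<in> C. \<tau> w \<le> \<tau> w'" using fC wm m_def by auto
  have P: "(w, x) \<in> E\<^sup>* \<and> (w, y) \<in> E\<^sup>* \<and> (\<forall>w'. (w', x) \<in> E\<^sup>* \<and> (w', y) \<in> E\<^sup>* \<longrightarrow> (w', w) \<in> E\<^sup>*)"
  proof (intro conjI allI impI)
    show "(w, x) \<in> E\<^sup>*" "(w, y) \<in> E\<^sup>*" using wC C_def by auto
  next
    fix w' assume h: "(w', x) \<in> E\<^sup>* \<and> (w', y) \<in> E\<^sup>*"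
    then have "w' \<in> C" using C_def by auto
    show "(w', w) \<in> E\<^sup>*"
    proof (rule ccontr)
      assume nw: "(w', w) \<notin> E\<^sup>*"
      then have "(w, w') \<in> E\<^sup>*" using chain h wC C_def by blast
      then have "(w, w') \<in> E\<^sup>+" using nw by (metis rtranclD rtrancl.rtrancl_refl)
      then have "\<tau> w' < \<tau> w" using tm CV wC \<open>w' \<in> C\<close> unfolding time_map_def by blast
      then show False using wmin \<open>w' \<in> C\<close> by force
    qed
  qed
  have "lca E x y = w"
    unfolding lca_def
  proof (rule the_equality)
    show "(w, x) \<in> E\<^sup>* \<and> (w, y) \<in> E\<^sup>* \<and> (\<forall>w'. (w', x) \<in> E\<^sup>* \<and> (w', y) \<in> E\<^sup>* \<longrightarrow> (w', w) \<in> E\<^sup>*)"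
      by (rule P)
  next
    fix v assume "(v, x) \<in> E\<^sup>* \<and> (v, y) \<in> E\<^sup>* \<and> (\<forall>w'. (w', x) \<in> E\<^sup>* \<and> (w', y) \<in> E\<^sup>* \<longrightarrow> (w', v) \<in> E\<^sup>*)"
    then show "v = w" using P antis CV wC by blast
  qed
  then show ?thesis using P L_def by simp
qed

lemma triple:
  assumes "x \<in> V" "y \<in> V" "u \<in> V"
  shows "(L x y = L x u \<and> (L x y, L y u) \<in> E\<^sup>*) \<or>
         (L x y = L y u \<and> (L x y, L x u) \<in> E\<^sup>*) \<or>
         (L x u = L y u \<and> (L x u, L x y) \<in> E\<^sup>*)"
proof -
  note p = lca_prop[OF assms(1,2)] and q = lca_prop[OF assms(1,3)] and r = lca_prop[OF assms(2,3)]
  have pV: "L x y \<in> V" "L x u \<in> V" "L y u \<in> V" using p q r anc_in assms by blast+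
  have "(L x y, L x u) \<in> E\<^sup>* \<or> (L x u, L x y) \<in> E\<^sup>*" using chain p q by blast
  then show ?thesis
  proof
    assume pq: "(L x y, L x u) \<in> E\<^sup>*"
    have pr: "(L x y, L y u) \<in> E\<^sup>*" using p q r pq by (meson rtrancl_trans)
    have "(L y u, L x u) \<in> E\<^sup>* \<or> (L x u, L y u) \<in> E\<^sup>*" using chain q r by blast
    then show ?thesis
    proof
      assume "(L y u, L x u) \<in> E\<^sup>*"
      then have "(L y u, L x y) \<in> E\<^sup>*" using p q r by (meson rtrancl_trans)
      then have "L x y = L y u" using antis pr pV by blast
      then show ?thesis using pq by simp
    next
      assume "(L x u, L y u) \<in> E\<^sup>*"
      then have "(L x u, L x y) \<in> E\<^sup>*" using p q r by (meson rtrancl_trans)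
      then have "L x y = L x u" using antis pq pV by blast
      then show ?thesis using pr by simp
    qed
  next
    assume qp: "(L x u, L x y) \<in> E\<^sup>*"
    have qr: "(L x u, L y u) \<in> E\<^sup>*" using p q r qp by (meson rtrancl_trans)
    have "(L y u, L x y) \<in> E\<^sup>* \<or> (L x y, L y u) \<in> E\<^sup>*" using chain p r by blast
    then show ?thesis
    proof
      assume "(L y u, L x y) \<in> E\<^sup>*"
      then have "(L y u, L x u) \<in> E\<^sup>*" using p q r by (meson rtrancl_trans)
      then have "L x u = L y u" using antis qr pV by blast
      then show ?thesis using qp by simp
    next
      assume pr': "(L x y, L y u) \<in> E\<^sup>*"
      then have "(L x y, L x u) \<in> E\<^sup>*" using p q r by (meson rtrancl_trans)
      then have "L x y = L x u" using antis qp pV by blast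
      then show ?thesis using pr' by simp
    qed
  qed
qed

lemma nop4:
  assumes V: "a \<in> V" "b \<in> V" "c \<in> V" "d \<in> V"
    and h: "P (L a b)" "P (L b c)" "P (L c d)" "\<not> P (L a c)" "\<not> P (L b d)" "\<not> P (L a d)"
  shows False
proof -
  have 1: "L a b = L b c" "(L a b, L a c) \<in> E\<^sup>*" using triple[OF V(1,2,3)] h by auto
  have 2: "L b c = L c d" using triple[OF V(2,3,4)] h by auto
  have 3: "L a c = L a d" "(L a c, L c d) \<in> E\<^sup>*" using triple[OF V(1,3,4)] h by auto
  have "L a c \<in> V" using lca_prop[OF V(1,3)] anc_in V by blast
  then have "L a b = L a c" using 1 2 3 antis by metis
  then show False using h 1 by simp
qed

end

theorem lemma34:
  fixes VT :: "'a set" and ET :: "('a \<times> 'a) set" and zT :: 'a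
    and VS :: "'b set" and ES :: "('b \<times> 'b) set" and zS :: 'b
    and \<sigma> :: "'a \<Rightarrow> 'b" and \<mu> :: "'a \<Rightarrow> 'b loc"
    and \<tau>T :: "'a \<Rightarrow> real" and \<tau>S :: "'b \<Rightarrow> real"
  assumes "relaxed_scenario VT ET zT VS ES zS \<sigma> \<mu> \<tau>T \<tau>S"
  shows "cograph (leaves VT ET zT) (wQO_adj ET VS ES zS \<mu>)
       \<and> cograph (leaves VT ET zT) (wO_adj ET VS ES zS \<mu>)"
proof -
  interpret tr VT ET zT \<tau>T
    using assms unfolding relaxed_scenario_def planted_phylo_tree_def
    by unfold_locales auto
  have lv: "leaves VT ET zT \<subseteq> VT" unfolding leaves_def by auto
  define P where "P v = (\<exists>w \<in> inner VS ES zS. \<mu> v = Vx w)" for v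
  have Q: "wQO_adj ET VS ES zS \<mu> x y = (x \<noteq> y \<and> P (L x y))" for x y
    unfolding wQO_adj_def P_def L_def by simp
  have c1: "cograph (leaves VT ET zT) (wQO_adj ET VS ES zS \<mu>)"
    unfolding cograph_def Q
  proof clarify
    fix a b c d assume "a \<in> leaves VT ET zT" "b \<in> leaves VT ET zT" "c \<in> leaves VT ET zT" "d \<in> leaves VT ET zT"
      "distinct [a, b, c, d]" "P (L a b)" "P (L b c)" "P (L c d)"
      "\<not> (a \<noteq> c \<and> P (L a c))" "\<not> (b \<noteq> d \<and> P (L b d))" "\<not> (a \<noteq> d \<and> P (L a d))"
    then show False using nop4[of a b c d P] lv by auto
  qed
  define N where "N x y = (\<not> (\<exists>u v. on_path ET x y u v \<and> hgt_edge ET ES \<mu> u v))" for x y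
  have Ntr: "N x y \<Longrightarrow> N y u \<Longrightarrow> N x u" for x y u
    unfolding N_def on_path_def by blast
  have O: "wO_adj ET VS ES zS \<mu> x y = (wQO_adj ET VS ES zS \<mu> x y \<and> N x y)" for x y
    unfolding wO_adj_def N_def by simp
  have c2: "cograph (leaves VT ET zT) (wO_adj ET VS ES zS \<mu>)"
    using c1 unfolding cograph_def O by (meson Ntr)
  show ?thesis using c1 c2 by simp
qed

end
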